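(* Let $(\mathcal A;\mathcal E)$ be an exact category with exact coproducts and let $\{\mathcal J_i: i\in I\}$ be a set-indexed family of special preenveloping ideals. Then $\bigcap_{i\in I}\mathcal J_i$ is a special preenveloping ideal.
   Context: An exact category $(\mathcal A;\mathcal E)$ is an additive category with a class of conflations $X\to Y\to Z$ satisfying the Quillen–Keller axioms; it has exact coproducts if set-indexed coproducts exist and coproducts of conflations are conflations. $\mathrm{Ext}(A,B)$ is the group of conflations $B\to C\to A$. Ideals are families of subgroups of Hom closed under composition with arbitrary morphisms (the family $i\mapsto\mathcal J_i$ is assumed uniformly indexed so that the intersection is a class). For $a:A_0\to A_1$, $b:B_0\to B_1$, $\mathrm{Ext}(a,b):\mathrm{Ext}(A_1,B_0)\to\mathrm{Ext}(A_0,B_1)$ is pushout along $b$ followed by pullback along $a$; ${}^\perp\mathcal J$ is the ideal of $a$ with $\mathrm{Ext}(a,j)=0$ for all $j\in\mathcal J$. A special $\mathcal J$-preenvelope of $B$ is a morphism $j:B\to C_0$ in $\mathcal J$ for which there are conflations $B\xrightarrow{j}C_0\to A_0$, $B\to C_1\to A_1$ and a morphism of conflations between them with components $(1_B,c,a)$ where $a\in{}^\perp\mathcal J$. $\mathcal J$ is special preenveloping if every object has a special $\mathcal J$-preenvelope. *)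

theory Defs
  imports Main
begin

text \<open>Hom A B is the set of morphisms A -> B
  (empty unless A, B are objects). cmp g f is the composite g o f (first f, then g).
  add is the addition of parallel morphisms, zero A B the zero morphism A -> B.
  Conf X Y Z is the set of conflations X -f-> Y -g-> Z, stored as pairs (f, g).\<close>

record ('o, 'm) excat =
  Ob   :: "'o set"
  Hom  :: "'o \<Rightarrow> 'o \<Rightarrow> 'm set"
  cmp  :: "'m \<Rightarrow> 'm \<Rightarrow> 'm"
  idt  :: "'o \<Rightarrow> 'm"
  add  :: "'m \<Rightarrow> 'm \<Rightarrow> 'm"
  zero :: "'o \<Rightarrow> 'o \<Rightarrow> 'm"
  Conf :: "'o \<Rightarrow> 'o \<Rightarrow> 'o \<Rightarrow> ('m \<times> 'm) set"

definition category_axioms :: "('o, 'm) excat \<Rightarrow> bool" where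
  "category_axioms C \<longleftrightarrow>
     (\<forall>A B. Hom C A B \<noteq> {} \<longrightarrow> A \<in> Ob C \<and> B \<in> Ob C) \<and>
     (\<forall>A\<in>Ob C. idt C A \<in> Hom C A A) \<and>
     (\<forall>A B D f g. f \<in> Hom C A B \<and> g \<in> Hom C B D \<longrightarrow> cmp C g f \<in> Hom C A D) \<and>
     (\<forall>A B D E f g h. f \<in> Hom C A B \<and> g \<in> Hom C B D \<and> h \<in> Hom C D E \<longrightarrow>
        cmp C h (cmp C g f) = cmp C (cmp C h g) f) \<and>
     (\<forall>A B f. f \<in> Hom C A B \<longrightarrow> cmp C f (idt C A) = f \<and> cmp C (idt C B) f = f)"

definition is_zero_object :: "('o, 'm) excat \<Rightarrow> 'o \<Rightarrow> bool" where
  "is_zero_object C Z \<longleftrightarrow> Z \<in> Ob C \<and>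
     (\<forall>A\<in>Ob C. Hom C Z A = {zero C Z A} \<and> Hom C A Z = {zero C A Z})"

definition is_biproduct ::
  "('o, 'm) excat \<Rightarrow> 'o \<Rightarrow> 'o \<Rightarrow> 'o \<Rightarrow> 'm \<Rightarrow> 'm \<Rightarrow> 'm \<Rightarrow> 'm \<Rightarrow> bool" where
  "is_biproduct C A B S i1 i2 p1 p2 \<longleftrightarrow> S \<in> Ob C \<and>
     i1 \<in> Hom C A S \<and> i2 \<in> Hom C B S \<and> p1 \<in> Hom C S A \<and> p2 \<in> Hom C S B \<and>
     cmp C p1 i1 = idt C A \<and> cmp C p2 i2 = idt C B \<and>
     cmp C p1 i2 = zero C B A \<and> cmp C p2 i1 = zero C A B \<and>
     add C (cmp C i1 p1) (cmp C i2 p2) = idt C S"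

definition additive_category :: "('o, 'm) excat \<Rightarrow> bool" where
  "additive_category C \<longleftrightarrow> category_axioms C \<and>
     (\<forall>A\<in>Ob C. \<forall>B\<in>Ob C.
        zero C A B \<in> Hom C A B \<and>
        (\<forall>f\<in>Hom C A B. \<forall>g\<in>Hom C A B. add C f g \<in> Hom C A B) \<and>
        (\<forall>f\<in>Hom C A B. \<forall>g\<in>Hom C A B. \<forall>h\<in>Hom C A B.
            add C (add C f g) h = add C f (add C g h)) \<and>
        (\<forall>f\<in>Hom C A B. \<forall>g\<in>Hom C A B. add C f g = add C g f) \<and>
        (\<forall>f\<in>Hom C A B. add C f (zero C A B) = f) \<and>
        (\<forall>f\<in>Hom C A B. \<exists>g\<in>Hom C A B. add C f g = zero C A B)) \<and>
     (\<forall>A B D f g g'. f \<in> Hom C A B \<and> g \<in> Hom C B D \<and> g' \<in> Hom C B D \<longrightarrow>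
        cmp C (add C g g') f = add C (cmp C g f) (cmp C g' f)) \<and>
     (\<forall>A B D f f' g. f \<in> Hom C A B \<and> f' \<in> Hom C A B \<and> g \<in> Hom C B D \<longrightarrow>
        cmp C g (add C f f') = add C (cmp C g f) (cmp C g f')) \<and>
     (\<exists>Z. is_zero_object C Z) \<and>
     (\<forall>A\<in>Ob C. \<forall>B\<in>Ob C. \<exists>S i1 i2 p1 p2. is_biproduct C A B S i1 i2 p1 p2)"

definition is_iso :: "('o, 'm) excat \<Rightarrow> 'o \<Rightarrow> 'o \<Rightarrow> 'm \<Rightarrow> bool" where
  "is_iso C A B f \<longleftrightarrow> f \<in> Hom C A B \<and>
     (\<exists>g\<in>Hom C B A. cmp C g f = idt C A \<and> cmp C f g = idt C B)"

definition is_kernel :: "('o, 'm) excat \<Rightarrow> 'o \<Rightarrow> 'o \<Rightarrow> 'o \<Rightarrow> 'm \<Rightarrow> 'm \<Rightarrow> bool" where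
  "is_kernel C X Y Z f g \<longleftrightarrow> f \<in> Hom C X Y \<and> g \<in> Hom C Y Z \<and> cmp C g f = zero C X Z \<and>
     (\<forall>W\<in>Ob C. \<forall>h\<in>Hom C W Y. cmp C g h = zero C W Z \<longrightarrow>
        (\<exists>!u. u \<in> Hom C W X \<and> cmp C f u = h))"

definition is_cokernel :: "('o, 'm) excat \<Rightarrow> 'o \<Rightarrow> 'o \<Rightarrow> 'o \<Rightarrow> 'm \<Rightarrow> 'm \<Rightarrow> bool" where
  "is_cokernel C X Y Z f g \<longleftrightarrow> f \<in> Hom C X Y \<and> g \<in> Hom C Y Z \<and> cmp C g f = zero C X Z \<and>
     (\<forall>W\<in>Ob C. \<forall>h\<in>Hom C Y W. cmp C h f = zero C X W \<longrightarrow>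
        (\<exists>!u. u \<in> Hom C Z W \<and> cmp C u g = h))"

text \<open>Morphism of short sequences X -f-> Y -g-> Z  to  X' -f'-> Y' -g'-> Z'
  with components (x, y, z).\<close>
definition conf_hom ::
  "('o, 'm) excat \<Rightarrow> 'o \<Rightarrow> 'o \<Rightarrow> 'o \<Rightarrow> 'm \<Rightarrow> 'm \<Rightarrow> 'o \<Rightarrow> 'o \<Rightarrow> 'o \<Rightarrow> 'm \<Rightarrow> 'm
     \<Rightarrow> 'm \<Rightarrow> 'm \<Rightarrow> 'm \<Rightarrow> bool" where
  "conf_hom C X Y Z f g X' Y' Z' f' g' x y z \<longleftrightarrow>
     x \<in> Hom C X X' \<and> y \<in> Hom C Y Y' \<and> z \<in> Hom C Z Z' \<and>
     cmp C y f = cmp C f' x \<and> cmp C z g = cmp C g' y"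

definition inflation :: "('o, 'm) excat \<Rightarrow> 'o \<Rightarrow> 'o \<Rightarrow> 'm \<Rightarrow> bool" where
  "inflation C X Y f \<longleftrightarrow> (\<exists>Z g. (f, g) \<in> Conf C X Y Z)"

definition deflation :: "('o, 'm) excat \<Rightarrow> 'o \<Rightarrow> 'o \<Rightarrow> 'm \<Rightarrow> bool" where
  "deflation C Y Z g \<longleftrightarrow> (\<exists>X f. (f, g) \<in> Conf C X Y Z)"

text \<open>Pushout of f : A -> B along a : A -> A', with f' : A' -> P and a' : B -> P.\<close>
definition is_pushout ::
  "('o, 'm) excat \<Rightarrow> 'o \<Rightarrow> 'o \<Rightarrow> 'o \<Rightarrow> 'o \<Rightarrow> 'm \<Rightarrow> 'm \<Rightarrow> 'm \<Rightarrow> 'm \<Rightarrow> bool" where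
  "is_pushout C A B A' P f a f' a' \<longleftrightarrow> P \<in> Ob C \<and>
     f \<in> Hom C A B \<and> a \<in> Hom C A A' \<and> f' \<in> Hom C A' P \<and> a' \<in> Hom C B P \<and>
     cmp C a' f = cmp C f' a \<and>
     (\<forall>W\<in>Ob C. \<forall>u\<in>Hom C B W. \<forall>v\<in>Hom C A' W. cmp C u f = cmp C v a \<longrightarrow>
        (\<exists>!w. w \<in> Hom C P W \<and> cmp C w a' = u \<and> cmp C w f' = v))"

text \<open>Pullback of g : B -> A along a : A' -> A, with g' : P -> A' and a' : P -> B.\<close>
definition is_pullback ::
  "('o, 'm) excat \<Rightarrow> 'o \<Rightarrow> 'o \<Rightarrow> 'o \<Rightarrow> 'o \<Rightarrow> 'm \<Rightarrow> 'm \<Rightarrow> 'm \<Rightarrow> 'm \<Rightarrow> bool" where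
  "is_pullback C A B A' P g a g' a' \<longleftrightarrow> P \<in> Ob C \<and>
     g \<in> Hom C B A \<and> a \<in> Hom C A' A \<and> g' \<in> Hom C P A' \<and> a' \<in> Hom C P B \<and>
     cmp C g a' = cmp C a g' \<and>
     (\<forall>W\<in>Ob C. \<forall>u\<in>Hom C W B. \<forall>v\<in>Hom C W A'. cmp C g u = cmp C a v \<longrightarrow>
        (\<exists>!w. w \<in> Hom C W P \<and> cmp C a' w = u \<and> cmp C g' w = v))"

text \<open>Quillen--Keller axioms (in the form of Buehler, Exact categories, Def. 2.1).\<close>
definition exact_category :: "('o, 'm) excat \<Rightarrow> bool" where
  "exact_category C \<longleftrightarrow> additive_category C \<and>
     (\<forall>X Y Z f g. (f, g) \<in> Conf C X Y Z \<longrightarrow>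
        X \<in> Ob C \<and> Y \<in> Ob C \<and> Z \<in> Ob C \<and> is_kernel C X Y Z f g \<and> is_cokernel C X Y Z f g) \<and>
     (\<forall>X Y Z f g X' Y' Z' f' g' x y z.
        (f, g) \<in> Conf C X Y Z \<and> f' \<in> Hom C X' Y' \<and> g' \<in> Hom C Y' Z' \<and>
        conf_hom C X Y Z f g X' Y' Z' f' g' x y z \<and>
        is_iso C X X' x \<and> is_iso C Y Y' y \<and> is_iso C Z Z' z \<longrightarrow> (f', g') \<in> Conf C X' Y' Z') \<and>
     (\<forall>A\<in>Ob C. inflation C A A (idt C A)) \<and>
     (\<forall>A\<in>Ob C. deflation C A A (idt C A)) \<and>
     (\<forall>A B D f g. inflation C A B f \<and> inflation C B D g \<longrightarrow> inflation C A D (cmp C g f)) \<and>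
     (\<forall>A B D f g. deflation C A B f \<and> deflation C B D g \<longrightarrow> deflation C A D (cmp C g f)) \<and>
     (\<forall>A B A' f a. inflation C A B f \<and> a \<in> Hom C A A' \<longrightarrow>
        (\<exists>P f' a'. is_pushout C A B A' P f a f' a' \<and> inflation C A' P f')) \<and>
     (\<forall>A B A' g a. deflation C B A g \<and> a \<in> Hom C A' A \<longrightarrow>
        (\<exists>P g' a'. is_pullback C A B A' P g a g' a' \<and> deflation C P A' g'))"

definition is_coproduct ::
  "('o, 'm) excat \<Rightarrow> 'i set \<Rightarrow> ('i \<Rightarrow> 'o) \<Rightarrow> 'o \<Rightarrow> ('i \<Rightarrow> 'm) \<Rightarrow> bool" where
  "is_coproduct C K X S \<iota> \<longleftrightarrow> S \<in> Ob C \<and> (\<forall>k\<in>K. \<iota> k \<in> Hom C (X k) S) \<and>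
     (\<forall>W\<in>Ob C. \<forall>h. (\<forall>k\<in>K. h k \<in> Hom C (X k) W) \<longrightarrow>
        (\<exists>!u. u \<in> Hom C S W \<and> (\<forall>k\<in>K. cmp C u (\<iota> k) = h k)))"

text \<open>Exact coproducts, for families indexed by arbitrary sets of the index type 'i:
  coproducts exist, and the coproduct of conflations (with the induced maps) is a conflation.\<close>
definition has_exact_coproducts :: "('o, 'm) excat \<Rightarrow> 'i itself \<Rightarrow> bool" where
  "has_exact_coproducts C (_ :: 'i itself) \<longleftrightarrow>
     (\<forall>(K :: 'i set) X. (\<forall>k\<in>K. X k \<in> Ob C) \<longrightarrow> (\<exists>S \<iota>. is_coproduct C K X S \<iota>)) \<and>
     (\<forall>(K :: 'i set) X Y Z f g SX \<iota>X SY \<iota>Y SZ \<iota>Z u v.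
        (\<forall>k\<in>K. (f k, g k) \<in> Conf C (X k) (Y k) (Z k)) \<and>
        is_coproduct C K X SX \<iota>X \<and> is_coproduct C K Y SY \<iota>Y \<and> is_coproduct C K Z SZ \<iota>Z \<and>
        u \<in> Hom C SX SY \<and> (\<forall>k\<in>K. cmp C u (\<iota>X k) = cmp C (\<iota>Y k) (f k)) \<and>
        v \<in> Hom C SY SZ \<and> (\<forall>k\<in>K. cmp C v (\<iota>Y k) = cmp C (\<iota>Z k) (g k)) \<longrightarrow>
        (u, v) \<in> Conf C SX SY SZ)"

definition is_ideal :: "('o, 'm) excat \<Rightarrow> ('o \<Rightarrow> 'o \<Rightarrow> 'm set) \<Rightarrow> bool" where
  "is_ideal C J \<longleftrightarrow>
     (\<forall>A B. J A B \<subseteq> Hom C A B) \<and>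
     (\<forall>A\<in>Ob C. \<forall>B\<in>Ob C. zero C A B \<in> J A B \<and>
        (\<forall>f\<in>J A B. \<forall>g\<in>J A B. add C f g \<in> J A B) \<and>
        (\<forall>f\<in>J A B. \<forall>g\<in>Hom C A B. add C f g = zero C A B \<longrightarrow> g \<in> J A B)) \<and>
     (\<forall>A B D f g. f \<in> J A B \<and> g \<in> Hom C B D \<longrightarrow> cmp C g f \<in> J A D) \<and>
     (\<forall>W A B h f. h \<in> Hom C W A \<and> f \<in> J A B \<longrightarrow> cmp C f h \<in> J W B)"

definition splits :: "('o, 'm) excat \<Rightarrow> 'o \<Rightarrow> 'o \<Rightarrow> 'm \<Rightarrow> bool" where
  "splits C X Y f \<longleftrightarrow> (\<exists>r\<in>Hom C Y X. cmp C r f = idt C X)"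

text \<open>Ext(a,b) = 0 for a : A0 -> A1 and b : B0 -> B1: for every conflation
  xi : B0 -> D -> A1, the conflation obtained by pushout along b (i.e. any conflation
  B1 -> E -> A1 receiving a morphism of conflations (b, d, 1) from xi) followed by pullback
  along a (any conflation B1 -> F -> A0 with a morphism of conflations (1, e, a) to it) splits.\<close>
definition Ext_zero ::
  "('o, 'm) excat \<Rightarrow> 'o \<Rightarrow> 'o \<Rightarrow> 'm \<Rightarrow> 'o \<Rightarrow> 'o \<Rightarrow> 'm \<Rightarrow> bool" where
  "Ext_zero C A0 A1 a B0 B1 b \<longleftrightarrow>
     (\<forall>D f g E f' g' d F f'' g'' e.
        (f, g) \<in> Conf C B0 D A1 \<and>
        (f', g') \<in> Conf C B1 E A1 \<and> conf_hom C B0 D A1 f g B1 E A1 f' g' b d (idt C A1) \<and>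
        (f'', g'') \<in> Conf C B1 F A0 \<and> conf_hom C B1 F A0 f'' g'' B1 E A1 f' g' (idt C B1) e a
        \<longrightarrow> splits C B1 F f'')"

definition perp_ideal :: "('o, 'm) excat \<Rightarrow> ('o \<Rightarrow> 'o \<Rightarrow> 'm set) \<Rightarrow> 'o \<Rightarrow> 'o \<Rightarrow> 'm set" where
  "perp_ideal C J A0 A1 =
     {a \<in> Hom C A0 A1. \<forall>B0 B1. \<forall>b\<in>J B0 B1. Ext_zero C A0 A1 a B0 B1 b}"

definition special_preenvelope ::
  "('o, 'm) excat \<Rightarrow> ('o \<Rightarrow> 'o \<Rightarrow> 'm set) \<Rightarrow> 'o \<Rightarrow> 'o \<Rightarrow> 'm \<Rightarrow> bool" where
  "special_preenvelope C J B C0 j \<longleftrightarrow> j \<in> J B C0 \<and>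
     (\<exists>A0 p0 C1 A1 j1 p1 c a.
        (j, p0) \<in> Conf C B C0 A0 \<and> (j1, p1) \<in> Conf C B C1 A1 \<and>
        conf_hom C B C0 A0 j p0 B C1 A1 j1 p1 (idt C B) c a \<and>
        a \<in> perp_ideal C J A0 A1)"

definition special_preenveloping :: "('o, 'm) excat \<Rightarrow> ('o \<Rightarrow> 'o \<Rightarrow> 'm set) \<Rightarrow> bool" where
  "special_preenveloping C J \<longleftrightarrow> is_ideal C J \<and>
     (\<forall>B\<in>Ob C. \<exists>C0 j. special_preenvelope C J B C0 j)"

text \<open>Intersection of a family of ideals (taken inside Hom, so that the empty
  intersection is the ideal of all morphisms).\<close>
definition Inter_ideal ::
  "('o, 'm) excat \<Rightarrow> 'i set \<Rightarrow> ('i \<Rightarrow> 'o \<Rightarrow> 'o \<Rightarrow> 'm set) \<Rightarrow> 'o \<Rightarrow> 'o \<Rightarrow> 'm set" where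
  "Inter_ideal C I J A B = Hom C A B \<inter> (\<Inter>i\<in>I. J i A B)"

end

theory Submission
  imports Defs
begin


locale exc = fixes C :: "('o,'m) excat" assumes ex: "exact_category C"
begin

lemma add_cat: "additive_category C" using ex exact_category_def by blast
lemma cat: "category_axioms C" using add_cat additive_category_def by blast

lemma hom_ob: "f \<in> Hom C A B \<Longrightarrow> A \<in> Ob C \<and> B \<in> Ob C"
  using cat unfolding category_axioms_def by blast
lemma id_hom: "A \<in> Ob C \<Longrightarrow> idt C A \<in> Hom C A A"
  using cat unfolding category_axioms_def by blast
lemma comp_hom: "f \<in> Hom C A B \<Longrightarrow> g \<in> Hom C B D \<Longrightarrow> cmp C g f \<in> Hom C A D"
  using cat unfolding category_axioms_def by blast
lemma assoc: "f \<in> Hom C A B \<Longrightarrow> g \<in> Hom C B D \<Longrightarrow> h \<in> Hom C D E \<Longrightarrow>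
   cmp C h (cmp C g f) = cmp C (cmp C h g) f"
  using cat unfolding category_axioms_def by blast
lemma id_r: "f \<in> Hom C A B \<Longrightarrow> cmp C f (idt C A) = f"
  using cat unfolding category_axioms_def by blast
lemma id_l: "f \<in> Hom C A B \<Longrightarrow> cmp C (idt C B) f = f"
  using cat unfolding category_axioms_def by blast


lemmas AD1 = add_cat[unfolded additive_category_def, THEN conjunct2, THEN conjunct1]
lemmas AD2 = add_cat[unfolded additive_category_def, THEN conjunct2, THEN conjunct2, THEN conjunct1]
lemmas AD3 = add_cat[unfolded additive_category_def, THEN conjunct2, THEN conjunct2, THEN conjunct2, THEN conjunct1]

lemma zero_hom: "A \<in> Ob C \<Longrightarrow> B \<in> Ob C \<Longrightarrow> zero C A B \<in> Hom C A B"
  using AD1 by simp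
lemma add_hom: assumes "f \<in> Hom C A B" "g \<in> Hom C A B" shows "add C f g \<in> Hom C A B"
  using AD1 hom_ob[OF assms(1)] assms by blast
lemma add_assoc: assumes "f \<in> Hom C A B" "g \<in> Hom C A B" "h \<in> Hom C A B" shows
   "add C (add C f g) h = add C f (add C g h)"
  using AD1 hom_ob[OF assms(1)] assms by blast
lemma add_comm: assumes "f \<in> Hom C A B" "g \<in> Hom C A B" shows "add C f g = add C g f"
  using AD1 hom_ob[OF assms(1)] assms by blast
lemma add_zero: assumes "f \<in> Hom C A B" shows "add C f (zero C A B) = f"
  using AD1 hom_ob[OF assms(1)] assms by blast
lemma zero_add: "f \<in> Hom C A B \<Longrightarrow> add C (zero C A B) f = f"
  by (metis add_comm add_zero hom_ob zero_hom)
lemma add_neg: assumes "f \<in> Hom C A B" shows "\<exists>g\<in>Hom C A B. add C f g = zero C A B"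
  using AD1 hom_ob[OF assms(1)] assms by blast
lemma distr_r: "f \<in> Hom C A B \<Longrightarrow> g \<in> Hom C B D \<Longrightarrow> g' \<in> Hom C B D \<Longrightarrow>
   cmp C (add C g g') f = add C (cmp C g f) (cmp C g' f)"
  using AD2 by blast
lemma distr_l: "f \<in> Hom C A B \<Longrightarrow> f' \<in> Hom C A B \<Longrightarrow> g \<in> Hom C B D \<Longrightarrow>
   cmp C g (add C f f') = add C (cmp C g f) (cmp C g f')"
  using AD3 by blast

lemma add_cancel:
  assumes x: "x \<in> Hom C A B" and y: "y \<in> Hom C A B" and e: "add C x y = x"
  shows "y = zero C A B"
proof -
  obtain n where n: "n \<in> Hom C A B" "add C x n = zero C A B" using add_neg[OF x] by blast
  have "y = add C y (add C x n)" using n add_zero[OF y] by simp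
  also have "\<dots> = add C (add C y x) n" using add_assoc[OF y x n(1)] by simp
  also have "\<dots> = add C (add C x y) n" using add_comm[OF x y] by simp
  also have "\<dots> = zero C A B" using e n by simp
  finally show ?thesis .
qed

lemma comp_zero:
  assumes g: "g \<in> Hom C B D" and A: "A \<in> Ob C"
  shows "cmp C g (zero C A B) = zero C A D"
proof -
  have B: "B \<in> Ob C" using hom_ob[OF g] by blast
  have z: "zero C A B \<in> Hom C A B" using zero_hom[OF A B] .
  have gz: "cmp C g (zero C A B) \<in> Hom C A D" using comp_hom[OF z g] .
  have "cmp C g (zero C A B) = cmp C g (add C (zero C A B) (zero C A B))"
    using add_zero[OF z] by simp
  also have "\<dots> = add C (cmp C g (zero C A B)) (cmp C g (zero C A B))"
    using distr_l[OF z z g] .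
  finally show ?thesis using add_cancel[OF gz gz] by simp
qed

lemma zero_comp:
  assumes f: "f \<in> Hom C A B" and D: "D \<in> Ob C"
  shows "cmp C (zero C B D) f = zero C A D"
proof -
  have B: "B \<in> Ob C" using hom_ob[OF f] by blast
  have z: "zero C B D \<in> Hom C B D" using zero_hom[OF B D] .
  have gz: "cmp C (zero C B D) f \<in> Hom C A D" using comp_hom[OF f z] .
  have "cmp C (zero C B D) f = cmp C (add C (zero C B D) (zero C B D)) f"
    using add_zero[OF z] by simp
  also have "\<dots> = add C (cmp C (zero C B D) f) (cmp C (zero C B D) f)"
    using distr_r[OF f z z] .
  finally show ?thesis using add_cancel[OF gz gz] by simp
qed

lemmas EX2 = ex[unfolded exact_category_def, THEN conjunct2, THEN conjunct1]
lemmas EX3 = ex[unfolded exact_category_def, THEN conjunct2, THEN conjunct2, THEN conjunct1]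
lemmas EX8 = ex[unfolded exact_category_def, THEN conjunct2, THEN conjunct2, THEN conjunct2,
   THEN conjunct2, THEN conjunct2, THEN conjunct2, THEN conjunct2, THEN conjunct1]
lemmas EX9 = ex[unfolded exact_category_def, THEN conjunct2, THEN conjunct2, THEN conjunct2,
   THEN conjunct2, THEN conjunct2, THEN conjunct2, THEN conjunct2, THEN conjunct2]

lemma conf_all:
  assumes "(f, g) \<in> Conf C X Y Z"
  shows "X \<in> Ob C \<and> Y \<in> Ob C \<and> Z \<in> Ob C \<and> is_kernel C X Y Z f g \<and> is_cokernel C X Y Z f g"
  using EX2 assms by blast

lemma conf_ker: "(f, g) \<in> Conf C X Y Z \<Longrightarrow> is_kernel C X Y Z f g"
  using conf_all by blast
lemma conf_coker: "(f, g) \<in> Conf C X Y Z \<Longrightarrow> is_cokernel C X Y Z f g"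
  using conf_all by blast

lemma conf_data:
  assumes "(f, g) \<in> Conf C X Y Z"
  shows "X \<in> Ob C" "Y \<in> Ob C" "Z \<in> Ob C" "f \<in> Hom C X Y" "g \<in> Hom C Y Z"
    "cmp C g f = zero C X Z"
  using conf_all[OF assms] unfolding is_kernel_def by blast+
lemma ker_fac:
  assumes "(f, g) \<in> Conf C X Y Z" "h \<in> Hom C W Y" "cmp C g h = zero C W Z"
  shows "\<exists>u\<in>Hom C W X. cmp C f u = h"
  using conf_ker[OF assms(1)] assms(2,3) hom_ob[OF assms(2)] unfolding is_kernel_def by blast

lemma coker_fac:
  assumes "(f, g) \<in> Conf C X Y Z" "h \<in> Hom C Y W" "cmp C h f = zero C X W"
  shows "\<exists>u\<in>Hom C Z W. cmp C u g = h"
  using conf_coker[OF assms(1)] assms(2,3) hom_ob[OF assms(2)] unfolding is_cokernel_def by blast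

lemma conf_mono:
  assumes c: "(f, g) \<in> Conf C X Y Z" and u1: "u1 \<in> Hom C W X" and u2: "u2 \<in> Hom C W X"
    and e: "cmp C f u1 = cmp C f u2"
  shows "u1 = u2"
proof -
  have W: "W \<in> Ob C" using hom_ob[OF u1] by blast
  have h: "cmp C f u1 \<in> Hom C W Y" using comp_hom[OF u1 conf_data(4)[OF c]] .
  have "cmp C g (cmp C f u1) = cmp C (cmp C g f) u1"
    using assoc[OF u1 conf_data(4,5)[OF c]] .
  also have "\<dots> = zero C W Z" using conf_data(6)[OF c] zero_comp[OF u1 conf_data(3)[OF c]] by simp
  finally have "cmp C g (cmp C f u1) = zero C W Z" .
  then have "\<exists>!u. u \<in> Hom C W X \<and> cmp C f u = cmp C f u1"
    using conf_ker[OF c, unfolded is_kernel_def, THEN conjunct2, THEN conjunct2, THEN conjunct2,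
      rule_format, OF W h] by simp
  then show ?thesis using u1 u2 e by (metis (no_types, lifting))
qed

lemma conf_epi:
  assumes c: "(f, g) \<in> Conf C X Y Z" and u1: "u1 \<in> Hom C Z W" and u2: "u2 \<in> Hom C Z W"
    and e: "cmp C u1 g = cmp C u2 g"
  shows "u1 = u2"
proof -
  have W: "W \<in> Ob C" using hom_ob[OF u1] by blast
  have h: "cmp C u1 g \<in> Hom C Y W" using comp_hom[OF conf_data(5)[OF c] u1] .
  have "cmp C (cmp C u1 g) f = cmp C u1 (cmp C g f)"
    using assoc[OF conf_data(4,5)[OF c] u1] by simp
  also have "\<dots> = zero C X W" using conf_data(6)[OF c] comp_zero[OF u1 conf_data(1)[OF c]] by simp
  finally have "cmp C (cmp C u1 g) f = zero C X W" .
  then have "\<exists>!u. u \<in> Hom C Z W \<and> cmp C u g = cmp C u1 g"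
    using conf_coker[OF c, unfolded is_cokernel_def, THEN conjunct2, THEN conjunct2, THEN conjunct2,
      rule_format, OF W h] by simp
  then show ?thesis using u1 u2 e by (metis (no_types, lifting))
qed

lemma conf_iso:
  assumes "(f, g) \<in> Conf C X Y Z" "f' \<in> Hom C X' Y'" "g' \<in> Hom C Y' Z'"
    "conf_hom C X Y Z f g X' Y' Z' f' g' x y z"
    "is_iso C X X' x" "is_iso C Y Y' y" "is_iso C Z Z' z"
  shows "(f', g') \<in> Conf C X' Y' Z'"
  apply (rule EX3[rule_format])
  using assms by blast

lemma id_iso: "A \<in> Ob C \<Longrightarrow> is_iso C A A (idt C A)"
  unfolding is_iso_def by (metis id_hom id_l)

end


context exc begin

lemma sec_split:
  assumes c: "(f, g) \<in> Conf C X Y Z" and s: "s \<in> Hom C Z Y" and gs: "cmp C g s = idt C Z"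
  shows "splits C X Y f"
proof -
  note d = conf_data[OF c]
  have t: "cmp C s g \<in> Hom C Y Y" using comp_hom[OF d(5) s] .
  obtain n where n: "n \<in> Hom C Y Y" "add C (cmp C s g) n = zero C Y Y" using add_neg[OF t] by blast
  have idY: "idt C Y \<in> Hom C Y Y" using id_hom d by blast
  define h where "h = add C (idt C Y) n"
  have h: "h \<in> Hom C Y Y" unfolding h_def using add_hom[OF idY n(1)] .
  have gt: "cmp C g (cmp C s g) = g"
    using assoc[OF d(5) s d(5)] gs id_l[OF d(5)] by simp
  have "add C (cmp C g (cmp C s g)) (cmp C g n) = zero C Y Z"
    using distr_l[OF t n(1) d(5)] n(2) comp_zero[OF d(5) d(2)] by simp
  then have e1: "add C g (cmp C g n) = zero C Y Z" using gt by simp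
  have "cmp C g h = add C (cmp C g (idt C Y)) (cmp C g n)"
    unfolding h_def using distr_l[OF idY n(1) d(5)] .
  also have "\<dots> = zero C Y Z" using e1 id_r[OF d(5)] by simp
  finally have "cmp C g h = zero C Y Z" .
  then obtain r where r: "r \<in> Hom C Y X" "cmp C f r = h" using ker_fac[OF c h] by blast
  have tf: "cmp C (cmp C s g) f = zero C X Y"
    using assoc[OF d(4) d(5) s] d(6) comp_zero[OF s d(1)] by simp
  have "add C (cmp C (cmp C s g) f) (cmp C n f) = zero C X Y"
    using distr_r[OF d(4) t n(1)] n(2) zero_comp[OF d(4) d(2)] by simp
  then have nf: "cmp C n f = zero C X Y" using tf zero_add[OF comp_hom[OF d(4) n(1)]] by simp
  have "cmp C f (cmp C r f) = cmp C h f" using assoc[OF d(4) r(1) d(4)] r(2) by simp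
  also have "\<dots> = add C (cmp C (idt C Y) f) (cmp C n f)"
    unfolding h_def using distr_r[OF d(4) idY n(1)] .
  also have "\<dots> = f" using nf id_l[OF d(4)] add_zero[OF d(4)] by simp
  also have "\<dots> = cmp C f (idt C X)" using id_r[OF d(4)] by simp
  finally have "cmp C r f = idt C X"
    using conf_mono[OF c comp_hom[OF d(4) r(1)] id_hom[OF d(1)]] by blast
  then show ?thesis unfolding splits_def using r(1) by blast
qed

lemma ret_split:
  assumes c: "(f, g) \<in> Conf C X Y Z" and r: "r \<in> Hom C Y X" and rf: "cmp C r f = idt C X"
  shows "\<exists>s\<in>Hom C Z Y. cmp C g s = idt C Z"
proof -
  note d = conf_data[OF c]
  have t: "cmp C f r \<in> Hom C Y Y" using comp_hom[OF r d(4)] .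
  obtain n where n: "n \<in> Hom C Y Y" "add C (cmp C f r) n = zero C Y Y" using add_neg[OF t] by blast
  have idY: "idt C Y \<in> Hom C Y Y" using id_hom d by blast
  define h where "h = add C (idt C Y) n"
  have h: "h \<in> Hom C Y Y" unfolding h_def using add_hom[OF idY n(1)] .
  have tf: "cmp C (cmp C f r) f = f"
    using assoc[OF d(4) r d(4)] rf id_r[OF d(4)] by simp
  have "add C (cmp C (cmp C f r) f) (cmp C n f) = zero C X Y"
    using distr_r[OF d(4) t n(1)] n(2) zero_comp[OF d(4) d(2)] by simp
  then have e1: "add C f (cmp C n f) = zero C X Y" using tf by simp
  have "cmp C h f = add C (cmp C (idt C Y) f) (cmp C n f)"
    unfolding h_def using distr_r[OF d(4) idY n(1)] .
  also have "\<dots> = zero C X Y" using e1 id_l[OF d(4)] by simp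
  finally have "cmp C h f = zero C X Y" .
  then obtain s where s: "s \<in> Hom C Z Y" "cmp C s g = h" using coker_fac[OF c h] by blast
  have gt: "cmp C g (cmp C f r) = zero C Y Z"
    using assoc[OF r d(4) d(5)] d(6) zero_comp[OF r d(3)] by simp
  have "add C (cmp C g (cmp C f r)) (cmp C g n) = zero C Y Z"
    using distr_l[OF t n(1) d(5)] n(2) comp_zero[OF d(5) d(2)] by simp
  then have gn: "cmp C g n = zero C Y Z" using gt zero_add[OF comp_hom[OF n(1) d(5)]] by simp
  have "cmp C (cmp C g s) g = cmp C g h" using assoc[OF d(5) s(1) d(5)] s(2) by simp
  also have "\<dots> = add C (cmp C g (idt C Y)) (cmp C g n)"
    unfolding h_def using distr_l[OF idY n(1) d(5)] .
  also have "\<dots> = g" using gn id_r[OF d(5)] add_zero[OF d(5)] by simp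
  also have "\<dots> = cmp C (idt C Z) g" using id_l[OF d(5)] by simp
  finally have "cmp C g s = idt C Z"
    using conf_epi[OF c comp_hom[OF s(1) d(5)] id_hom[OF d(3)]] by blast
  then show ?thesis using s(1) by blast
qed

end


context exc begin

lemma pb_conf:
  assumes c: "(f, g) \<in> Conf C X Y Z" and a: "a \<in> Hom C Z' Z"
  shows "\<exists>P f' g' a'. is_pullback C Z Y Z' P g a g' a' \<and> (f', g') \<in> Conf C X P Z' \<and> cmp C a' f' = f"
proof -
  note d = conf_data[OF c]
  have "deflation C Y Z g" unfolding deflation_def using c by blast
  then obtain P g' a' where pb: "is_pullback C Z Y Z' P g a g' a'" and df: "deflation C P Z' g'"
    using EX9[rule_format, OF conjI[OF _ a]] by blast
  obtain X0 f0 where c0: "(f0, g') \<in> Conf C X0 P Z'" using df unfolding deflation_def by blast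
  note d0 = conf_data[OF c0]
  have P: "P \<in> Ob C" and g'h: "g' \<in> Hom C P Z'" and a'h: "a' \<in> Hom C P Y"
    and sq: "cmp C g a' = cmp C a g'"
    using pb unfolding is_pullback_def by blast+
  note up = pb[unfolded is_pullback_def, THEN conjunct2, THEN conjunct2, THEN conjunct2,
    THEN conjunct2, THEN conjunct2, THEN conjunct2, rule_format]
  have z: "zero C X Z' \<in> Hom C X Z'" using zero_hom[OF d(1) d0(3)] .
  have e: "cmp C g f = cmp C a (zero C X Z')" using d(6) comp_zero[OF a d(1)] by simp
  obtain f' where f': "f' \<in> Hom C X P" "cmp C a' f' = f" "cmp C g' f' = zero C X Z'"
    using ex1_implies_ex[OF up[OF d(1) d(4) z e]] by blast
  have "cmp C g (cmp C a' f0) = cmp C (cmp C g a') f0" using assoc[OF d0(4) a'h d(5)] .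
  also have "\<dots> = cmp C a (cmp C g' f0)" using assoc[OF d0(4) g'h a] sq by simp
  also have "\<dots> = zero C X0 Z" using d0(6) comp_zero[OF a d0(1)] by simp
  finally obtain x where x: "x \<in> Hom C X0 X" "cmp C f x = cmp C a' f0"
    using ker_fac[OF c comp_hom[OF d0(4) a'h]] by blast
  obtain y where y: "y \<in> Hom C X X0" "cmp C f0 y = f'" using ker_fac[OF c0 f'(1) f'(3)] by blast
  have "cmp C f (cmp C x y) = cmp C (cmp C f x) y" using assoc[OF y(1) x(1) d(4)] .
  also have "\<dots> = cmp C a' (cmp C f0 y)" using x(2) assoc[OF y(1) d0(4) a'h] by simp
  also have "\<dots> = cmp C f (idt C X)" using y(2) f'(2) id_r[OF d(4)] by simp
  finally have xy: "cmp C x y = idt C X"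
    using conf_mono[OF c comp_hom[OF y(1) x(1)] id_hom[OF d(1)]] by blast
  have f0h: "f0 \<in> Hom C X0 P" using d0(4) .
  have a'f0: "cmp C a' f0 \<in> Hom C X0 Y" using comp_hom[OF f0h a'h] .
  have g'f0: "cmp C g' f0 \<in> Hom C X0 Z'" using comp_hom[OF f0h g'h] .
  have "cmp C g (cmp C a' f0) = cmp C a (cmp C g' f0)"
    using assoc[OF f0h a'h d(5)] assoc[OF f0h g'h a] sq by simp
  then have uq: "\<exists>!w. w \<in> Hom C X0 P \<and> cmp C a' w = cmp C a' f0 \<and> cmp C g' w = cmp C g' f0"
    using up[OF d0(1) a'f0 g'f0] by blast
  have fx: "cmp C f' x \<in> Hom C X0 P" using comp_hom[OF x(1) f'(1)] .
  have "cmp C a' (cmp C f' x) = cmp C a' f0"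
    using assoc[OF x(1) f'(1) a'h] f'(2) x(2) by simp
  moreover have "cmp C g' (cmp C f' x) = cmp C g' f0"
    using assoc[OF x(1) f'(1) g'h] f'(3) zero_comp[OF x(1) d0(3)] d0(6) by simp
  ultimately have f'x: "cmp C f' x = f0" using uq fx f0h by blast
  have "cmp C f0 (cmp C y x) = cmp C (cmp C f0 y) x" using assoc[OF x(1) y(1) f0h] .
  also have "\<dots> = cmp C f0 (idt C X0)" using y(2) f'x id_r[OF f0h] by simp
  finally have yx: "cmp C y x = idt C X0"
    using conf_mono[OF c0 comp_hom[OF x(1) y(1)] id_hom[OF d0(1)]] by blast
  have iso: "is_iso C X0 X x" unfolding is_iso_def using x(1) y(1) xy yx by blast
  have ch: "conf_hom C X0 P Z' f0 g' X P Z' f' g' x (idt C P) (idt C Z')"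
    unfolding conf_hom_def using x(1) id_hom[OF P] id_hom[OF d0(3)] id_l[OF f0h] f'x
      id_l[OF g'h] id_r[OF g'h] by simp
  have "(f', g') \<in> Conf C X P Z'"
    using conf_iso[OF c0 f'(1) g'h ch iso id_iso[OF P] id_iso[OF d0(3)]] .
  then show ?thesis using pb f'(2) by blast
qed

lemma po_conf:
  assumes c: "(f, g) \<in> Conf C X Y Z" and x: "x \<in> Hom C X X'"
  shows "\<exists>P f' g' x'. is_pushout C X Y X' P f x f' x' \<and> (f', g') \<in> Conf C X' P Z \<and> cmp C g' x' = g"
proof -
  note d = conf_data[OF c]
  have "inflation C X Y f" unfolding inflation_def using c by blast
  then obtain P f' x' where po: "is_pushout C X Y X' P f x f' x'" and inf: "inflation C X' P f'"
    using EX8[rule_format, OF conjI[OF _ x]] by blast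
  obtain Z0 g0 where c0: "(f', g0) \<in> Conf C X' P Z0" using inf unfolding inflation_def by blast
  note d0 = conf_data[OF c0]
  have P: "P \<in> Ob C" and f'h: "f' \<in> Hom C X' P" and x'h: "x' \<in> Hom C Y P"
    and sq: "cmp C x' f = cmp C f' x"
    using po unfolding is_pushout_def by blast+
  note up = po[unfolded is_pushout_def, THEN conjunct2, THEN conjunct2, THEN conjunct2,
    THEN conjunct2, THEN conjunct2, THEN conjunct2, rule_format]
  have z: "zero C X' Z \<in> Hom C X' Z" using zero_hom[OF d0(1) d(3)] .
  have e: "cmp C g f = cmp C (zero C X' Z) x" using d(6) zero_comp[OF x d(3)] by simp
  obtain g' where g': "g' \<in> Hom C P Z" "cmp C g' x' = g" "cmp C g' f' = zero C X' Z"
    using ex1_implies_ex[OF up[OF d(3) d(5) z e]] by blast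
  have g0h: "g0 \<in> Hom C P Z0" using d0(5) .
  have "cmp C (cmp C g0 x') f = cmp C g0 (cmp C x' f)" using assoc[OF d(4) x'h g0h] by simp
  also have "\<dots> = cmp C (cmp C g0 f') x" using assoc[OF x f'h g0h] sq by simp
  also have "\<dots> = zero C X Z0" using d0(6) zero_comp[OF x d0(3)] by simp
  finally obtain zz where zz: "zz \<in> Hom C Z Z0" "cmp C zz g = cmp C g0 x'"
    using coker_fac[OF c comp_hom[OF x'h g0h]] by blast
  obtain y where y: "y \<in> Hom C Z0 Z" "cmp C y g0 = g'" using coker_fac[OF c0 g'(1) g'(3)] by blast
  have "cmp C (cmp C y zz) g = cmp C y (cmp C zz g)" using assoc[OF d(5) zz(1) y(1)] by simp
  also have "\<dots> = cmp C (cmp C y g0) x'" using zz(2) assoc[OF x'h g0h y(1)] by simp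
  also have "\<dots> = cmp C (idt C Z) g" using y(2) g'(2) id_l[OF d(5)] by simp
  finally have yz: "cmp C y zz = idt C Z"
    using conf_epi[OF c comp_hom[OF zz(1) y(1)] id_hom[OF d(3)]] by blast
  have g0x': "cmp C g0 x' \<in> Hom C Y Z0" using comp_hom[OF x'h g0h] .
  have g0f': "cmp C g0 f' \<in> Hom C X' Z0" using comp_hom[OF f'h g0h] .
  have "cmp C (cmp C g0 x') f = cmp C (cmp C g0 f') x"
    using assoc[OF d(4) x'h g0h] assoc[OF x f'h g0h] sq by simp
  then have uq: "\<exists>!w. w \<in> Hom C P Z0 \<and> cmp C w x' = cmp C g0 x' \<and> cmp C w f' = cmp C g0 f'"
    using up[OF d0(3) g0x' g0f'] by blast
  have zg: "cmp C zz g' \<in> Hom C P Z0" using comp_hom[OF g'(1) zz(1)] .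
  have "cmp C (cmp C zz g') x' = cmp C g0 x'"
    using assoc[OF x'h g'(1) zz(1)] g'(2) zz(2) by simp
  moreover have "cmp C (cmp C zz g') f' = cmp C g0 f'"
    using assoc[OF f'h g'(1) zz(1)] g'(3) comp_zero[OF zz(1) d0(1)] d0(6) by simp
  ultimately have zg': "cmp C zz g' = g0" using uq zg g0h by blast
  have "cmp C (cmp C zz y) g0 = cmp C zz (cmp C y g0)" using assoc[OF g0h y(1) zz(1)] by simp
  also have "\<dots> = cmp C (idt C Z0) g0" using y(2) zg' id_l[OF g0h] by simp
  finally have zy: "cmp C zz y = idt C Z0"
    using conf_epi[OF c0 comp_hom[OF y(1) zz(1)] id_hom[OF d0(3)]] by blast
  have iso: "is_iso C Z0 Z y" unfolding is_iso_def using zz(1) y(1) zy yz by blast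
  have ch: "conf_hom C X' P Z0 f' g0 X' P Z f' g' (idt C X') (idt C P) y"
    unfolding conf_hom_def using y(1) id_hom[OF P] id_hom[OF d0(1)] id_l[OF f'h] id_r[OF f'h]
      y(2) id_r[OF g'(1)] by simp
  have "(f', g') \<in> Conf C X' P Z"
    using conf_iso[OF c0 f'h g'(1) ch id_iso[OF d0(1)] id_iso[OF P] iso] .
  then show ?thesis using po g'(2) by blast
qed

lemma cop_in: "is_coproduct C K X S \<iota> \<Longrightarrow> k \<in> K \<Longrightarrow> \<iota> k \<in> Hom C (X k) S"
  unfolding is_coproduct_def by blast
lemma cop_ob: "is_coproduct C K X S \<iota> \<Longrightarrow> S \<in> Ob C"
  unfolding is_coproduct_def by blast
lemma cop_ex:
  assumes "is_coproduct C K X S \<iota>" "W \<in> Ob C" "\<forall>k\<in>K. h k \<in> Hom C (X k) W"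
  shows "\<exists>u\<in>Hom C S W. \<forall>k\<in>K. cmp C u (\<iota> k) = h k"
proof -
  have "\<exists>!u. u \<in> Hom C S W \<and> (\<forall>k\<in>K. cmp C u (\<iota> k) = h k)"
    using assms(1)[unfolded is_coproduct_def, THEN conjunct2, THEN conjunct2, rule_format, OF assms(2) assms(3)[rule_format]] .
  then show ?thesis by blast
qed
lemma cop_uniq:
  assumes cp: "is_coproduct C K X S \<iota>" and u1: "u1 \<in> Hom C S W" and u2: "u2 \<in> Hom C S W"
    and e: "\<forall>k\<in>K. cmp C u1 (\<iota> k) = cmp C u2 (\<iota> k)"
  shows "u1 = u2"
proof -
  have W: "W \<in> Ob C" using hom_ob[OF u1] by blast
  have h: "\<forall>k\<in>K. cmp C u1 (\<iota> k) \<in> Hom C (X k) W" using comp_hom[OF cop_in[OF cp] u1] by blast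
  have "\<exists>!u. u \<in> Hom C S W \<and> (\<forall>k\<in>K. cmp C u (\<iota> k) = cmp C u1 (\<iota> k))"
    using cp[unfolded is_coproduct_def, THEN conjunct2, THEN conjunct2, rule_format, OF W h[rule_format]] .
  then show ?thesis using u1 u2 e by (metis (no_types, lifting))
qed

end


context exc begin

lemma pb_parts:
  assumes pb: "is_pullback C A B A' P g a g' a'"
  shows "P \<in> Ob C" "g \<in> Hom C B A" "a \<in> Hom C A' A" "g' \<in> Hom C P A'" "a' \<in> Hom C P B"
    "cmp C g a' = cmp C a g'"
  using pb unfolding is_pullback_def by blast+

lemma pb_ex:
  assumes pb: "is_pullback C A B A' P g a g' a'" and "u \<in> Hom C W B" "v \<in> Hom C W A'"
    "cmp C g u = cmp C a v"
  shows "\<exists>w\<in>Hom C W P. cmp C a' w = u \<and> cmp C g' w = v"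
proof -
  have W: "W \<in> Ob C" using hom_ob[OF assms(2)] by blast
  show ?thesis using ex1_implies_ex[OF pb[unfolded is_pullback_def, THEN conjunct2, THEN conjunct2, THEN conjunct2,
    THEN conjunct2, THEN conjunct2, THEN conjunct2, rule_format, OF W assms(2-4)]] by blast
qed

lemma pb_uniq:
  assumes pb: "is_pullback C A B A' P g a g' a'" and w1: "w1 \<in> Hom C W P" and w2: "w2 \<in> Hom C W P"
    and e1: "cmp C a' w1 = cmp C a' w2" and e2: "cmp C g' w1 = cmp C g' w2"
  shows "w1 = w2"
proof -
  note p = pb_parts[OF pb]
  have W: "W \<in> Ob C" using hom_ob[OF w1] by blast
  have u: "cmp C a' w1 \<in> Hom C W B" using comp_hom[OF w1 p(5)] .
  have v: "cmp C g' w1 \<in> Hom C W A'" using comp_hom[OF w1 p(4)] .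
  have "cmp C g (cmp C a' w1) = cmp C a (cmp C g' w1)"
    using assoc[OF w1 p(5) p(2)] assoc[OF w1 p(4) p(3)] p(6) by simp
  then have "\<exists>!w. w \<in> Hom C W P \<and> cmp C a' w = cmp C a' w1 \<and> cmp C g' w = cmp C g' w1"
    using pb[unfolded is_pullback_def, THEN conjunct2, THEN conjunct2, THEN conjunct2,
    THEN conjunct2, THEN conjunct2, THEN conjunct2, rule_format, OF W u v] by blast
  then show ?thesis using w1 w2 e1 e2 by (metis (no_types, lifting))
qed

lemma po_parts:
  assumes po: "is_pushout C A B A' P f a f' a'"
  shows "P \<in> Ob C" "f \<in> Hom C A B" "a \<in> Hom C A A'" "f' \<in> Hom C A' P" "a' \<in> Hom C B P"
    "cmp C a' f = cmp C f' a"
  using po unfolding is_pushout_def by blast+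

lemma po_ex:
  assumes po: "is_pushout C A B A' P f a f' a'" and "u \<in> Hom C B W" "v \<in> Hom C A' W"
    "cmp C u f = cmp C v a"
  shows "\<exists>w\<in>Hom C P W. cmp C w a' = u \<and> cmp C w f' = v"
proof -
  have W: "W \<in> Ob C" using hom_ob[OF assms(2)] by blast
  show ?thesis using ex1_implies_ex[OF po[unfolded is_pushout_def, THEN conjunct2, THEN conjunct2, THEN conjunct2,
    THEN conjunct2, THEN conjunct2, THEN conjunct2, rule_format, OF W assms(2-4)]] by blast
qed

lemma po_uniq:
  assumes po: "is_pushout C A B A' P f a f' a'" and w1: "w1 \<in> Hom C P W" and w2: "w2 \<in> Hom C P W"
    and e1: "cmp C w1 a' = cmp C w2 a'" and e2: "cmp C w1 f' = cmp C w2 f'"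
  shows "w1 = w2"
proof -
  note p = po_parts[OF po]
  have W: "W \<in> Ob C" using hom_ob[OF w1] by blast
  have u: "cmp C w1 a' \<in> Hom C B W" using comp_hom[OF p(5) w1] .
  have v: "cmp C w1 f' \<in> Hom C A' W" using comp_hom[OF p(4) w1] .
  have "cmp C (cmp C w1 a') f = cmp C (cmp C w1 f') a"
    using assoc[OF p(2) p(5) w1] assoc[OF p(3) p(4) w1] p(6) by simp
  then have "\<exists>!w. w \<in> Hom C P W \<and> cmp C w a' = cmp C w1 a' \<and> cmp C w f' = cmp C w1 f'"
    using po[unfolded is_pushout_def, THEN conjunct2, THEN conjunct2, THEN conjunct2,
    THEN conjunct2, THEN conjunct2, THEN conjunct2, rule_format, OF W u v] by blast
  then show ?thesis using w1 w2 e1 e2 by (metis (no_types, lifting))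
qed

end


context exc begin

lemma ext_piece:
  assumes c1: "(f, g) \<in> Conf C B0 D SA1" and c2: "(f', g') \<in> Conf C B1 E SA1"
    and h1: "conf_hom C B0 D SA1 f g B1 E SA1 f' g' b d (idt C SA1)"
    and c3: "(f'', g'') \<in> Conf C B1 F SA0"
    and h2: "conf_hom C B1 F SA0 f'' g'' B1 E SA1 f' g' (idt C B1) e aa"
    and i1: "i1 \<in> Hom C A1 SA1" and i0: "i0 \<in> Hom C A0 SA0" and ak: "ak \<in> Hom C A0 A1"
    and aa: "aa \<in> Hom C SA0 SA1" and sq: "cmp C aa i0 = cmp C i1 ak"
    and ez: "Ext_zero C A0 A1 ak B0 B1 b"
  shows "\<exists>s\<in>Hom C A0 F. cmp C g'' s = i0"
proof -
  note d1 = conf_data[OF c1] and d2 = conf_data[OF c2] and d3 = conf_data[OF c3]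
  have bh: "b \<in> Hom C B0 B1" and dh: "d \<in> Hom C D E" and df: "cmp C d f = cmp C f' b"
    and gd: "g = cmp C g' d"
    using h1 id_l[OF d1(5)] unfolding conf_hom_def by auto
  have eh: "e \<in> Hom C F E" and ef: "cmp C e f'' = f'" and ag: "cmp C aa g'' = cmp C g' e"
    using h2 id_r[OF d2(4)] unfolding conf_hom_def by auto
  have A1: "A1 \<in> Ob C" and A0: "A0 \<in> Ob C" using hom_ob[OF ak] by auto
  obtain Dk fk gk dk' where pbD: "is_pullback C SA1 D A1 Dk g i1 gk dk'"
    and cD: "(fk, gk) \<in> Conf C B0 Dk A1" and dkf: "cmp C dk' fk = f"
    using pb_conf[OF c1 i1] by blast
  obtain Ek f'k g'k ek' where pbE: "is_pullback C SA1 E A1 Ek g' i1 g'k ek'"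
    and cE: "(f'k, g'k) \<in> Conf C B1 Ek A1" and ekf: "cmp C ek' f'k = f'"
    using pb_conf[OF c2 i1] by blast
  obtain Fk f''k g''k fk' where pbF: "is_pullback C SA0 F A0 Fk g'' i0 g''k fk'"
    and cF: "(f''k, g''k) \<in> Conf C B1 Fk A0" and fkf: "cmp C fk' f''k = f''"
    using pb_conf[OF c3 i0] by blast
  note pD = pb_parts[OF pbD] and pE = pb_parts[OF pbE] and pF = pb_parts[OF pbF]
  note dD = conf_data[OF cD] and dE = conf_data[OF cE] and dF = conf_data[OF cF]
  have ddk: "cmp C d dk' \<in> Hom C Dk E" using comp_hom[OF pD(5) dh] .
  have "cmp C g' (cmp C d dk') = cmp C i1 gk"
    using assoc[OF pD(5) dh d2(5)] gd pD(6) by simp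
  then obtain dk where dk: "dk \<in> Hom C Dk Ek" "cmp C ek' dk = cmp C d dk'" "cmp C g'k dk = gk"
    using pb_ex[OF pbE ddk pD(4)] by blast
  have z0: "zero C B0 A1 \<in> Hom C B0 A1" using zero_hom[OF d1(1) A1] .
  have fb: "cmp C f'k b \<in> Hom C B0 Ek" using comp_hom[OF bh dE(4)] .
  have dkfk: "cmp C dk fk \<in> Hom C B0 Ek" using comp_hom[OF dD(4) dk(1)] .
  have "cmp C ek' (cmp C dk fk) = cmp C f' b"
    using assoc[OF dD(4) dk(1) pE(5)] dk(2) assoc[OF dD(4) pD(5) dh] dkf df by simp
  moreover have "cmp C ek' (cmp C f'k b) = cmp C f' b"
    using assoc[OF bh dE(4) pE(5)] ekf by simp
  moreover have "cmp C g'k (cmp C dk fk) = zero C B0 A1"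
    using assoc[OF dD(4) dk(1) pE(4)] dk(3) dD(6) by simp
  moreover have "cmp C g'k (cmp C f'k b) = zero C B0 A1"
    using assoc[OF bh dE(4) dE(5)] dE(6) zero_comp[OF bh A1] by simp
  ultimately have dkfk_eq: "cmp C dk fk = cmp C f'k b"
    using pb_uniq[OF pbE dkfk fb] by simp
  have chD: "conf_hom C B0 Dk A1 fk gk B1 Ek A1 f'k g'k b dk (idt C A1)"
    unfolding conf_hom_def using bh dk(1) id_hom[OF A1] dkfk_eq id_l[OF dD(5)] dk(3) by simp
  have efk: "cmp C e fk' \<in> Hom C Fk E" using comp_hom[OF pF(5) eh] .
  have agk: "cmp C ak g''k \<in> Hom C Fk A1" using comp_hom[OF pF(4) ak] .
  have "cmp C g' (cmp C e fk') = cmp C (cmp C g' e) fk'" using assoc[OF pF(5) eh d2(5)] .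
  also have "\<dots> = cmp C aa (cmp C g'' fk')" using ag assoc[OF pF(5) d3(5) aa] by simp
  also have "\<dots> = cmp C (cmp C aa i0) g''k" using pF(6) assoc[OF pF(4) i0 aa] by simp
  also have "\<dots> = cmp C i1 (cmp C ak g''k)" using sq assoc[OF pF(4) ak i1] by simp
  finally obtain ekk where ekk: "ekk \<in> Hom C Fk Ek" "cmp C ek' ekk = cmp C e fk'"
    "cmp C g'k ekk = cmp C ak g''k"
    using pb_ex[OF pbE efk agk] by blast
  have ekf'': "cmp C ekk f''k \<in> Hom C B1 Ek" using comp_hom[OF dF(4) ekk(1)] .
  have "cmp C ek' (cmp C ekk f''k) = cmp C ek' f'k"
    using assoc[OF dF(4) ekk(1) pE(5)] ekk(2) assoc[OF dF(4) pF(5) eh] fkf ef ekf by simp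
  moreover have "cmp C g'k (cmp C ekk f''k) = cmp C g'k f'k"
    using assoc[OF dF(4) ekk(1) pE(4)] ekk(3) assoc[OF dF(4) dF(5) ak] dF(6) dE(6)
      comp_zero[OF ak dF(1)] by simp
  ultimately have ekkf: "cmp C ekk f''k = f'k"
    using pb_uniq[OF pbE ekf'' dE(4)] by simp
  have chF: "conf_hom C B1 Fk A0 f''k g''k B1 Ek A1 f'k g'k (idt C B1) ekk ak"
    unfolding conf_hom_def using id_hom[OF dF(1)] ekk(1) ak ekkf id_r[OF dE(4)] ekk(3) by simp
  have "splits C B1 Fk f''k"
    using ez unfolding Ext_zero_def using cD cE chD cF chF by blast
  then obtain r where r: "r \<in> Hom C Fk B1" "cmp C r f''k = idt C B1" unfolding splits_def by blast
  obtain \<sigma> where \<sigma>: "\<sigma> \<in> Hom C A0 Fk" "cmp C g''k \<sigma> = idt C A0" using ret_split[OF cF r] by blast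
  have s: "cmp C fk' \<sigma> \<in> Hom C A0 F" using comp_hom[OF \<sigma>(1) pF(5)] .
  have "cmp C g'' (cmp C fk' \<sigma>) = cmp C (cmp C i0 g''k) \<sigma>"
    using assoc[OF \<sigma>(1) pF(5) d3(5)] pF(6) by simp
  also have "\<dots> = i0" using assoc[OF \<sigma>(1) pF(4) i0] \<sigma>(2) id_r[OF i0] by simp
  finally show ?thesis using s by blast
qed

lemma ext_coprod:
  assumes cA0: "is_coproduct C I A0 SA0 iA0" and cA1: "is_coproduct C I A1 SA1 iA1"
    and aa: "aa \<in> Hom C SA0 SA1"
    and ak: "\<forall>k\<in>I. a k \<in> Hom C (A0 k) (A1 k) \<and> cmp C aa (iA0 k) = cmp C (iA1 k) (a k)
       \<and> Ext_zero C (A0 k) (A1 k) (a k) B0 B1 b"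
  shows "Ext_zero C SA0 SA1 aa B0 B1 b"
  unfolding Ext_zero_def
proof (intro allI impI, elim conjE)
  fix D f g E f' g' d F f'' g'' e
  assume c1: "(f, g) \<in> Conf C B0 D SA1" and c2: "(f', g') \<in> Conf C B1 E SA1"
    and h1: "conf_hom C B0 D SA1 f g B1 E SA1 f' g' b d (idt C SA1)"
    and c3: "(f'', g'') \<in> Conf C B1 F SA0"
    and h2: "conf_hom C B1 F SA0 f'' g'' B1 E SA1 f' g' (idt C B1) e aa"
  note d3 = conf_data[OF c3]
  have "\<forall>k\<in>I. \<exists>s\<in>Hom C (A0 k) F. cmp C g'' s = iA0 k"
  proof
    fix k assume k: "k \<in> I"
    show "\<exists>s\<in>Hom C (A0 k) F. cmp C g'' s = iA0 k"
      using ext_piece[OF c1 c2 h1 c3 h2 cop_in[OF cA1 k] cop_in[OF cA0 k]] ak k aa by blast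
  qed
  then obtain sk where sk: "\<forall>k\<in>I. sk k \<in> Hom C (A0 k) F \<and> cmp C g'' (sk k) = iA0 k"
    by metis
  obtain s where s: "s \<in> Hom C SA0 F" "\<forall>k\<in>I. cmp C s (iA0 k) = sk k"
    using cop_ex[OF cA0 d3(2)] sk by blast
  have gs: "cmp C g'' s \<in> Hom C SA0 SA0" using comp_hom[OF s(1) d3(5)] .
  have "\<forall>k\<in>I. cmp C (cmp C g'' s) (iA0 k) = cmp C (idt C SA0) (iA0 k)"
  proof
    fix k assume k: "k \<in> I"
    have "cmp C (cmp C g'' s) (iA0 k) = cmp C g'' (cmp C s (iA0 k))"
      using assoc[OF cop_in[OF cA0 k] s(1) d3(5)] by simp
    also have "\<dots> = iA0 k" using s(2) sk k by simp
    also have "\<dots> = cmp C (idt C SA0) (iA0 k)" using id_l[OF cop_in[OF cA0 k]] by simp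
    finally show "cmp C (cmp C g'' s) (iA0 k) = cmp C (idt C SA0) (iA0 k)" .
  qed
  then have "cmp C g'' s = idt C SA0" using cop_uniq[OF cA0 gs id_hom[OF d3(3)]] by blast
  then show "splits C B1 F f''" using sec_split[OF c3 s(1)] by blast
qed

end


context exc begin

lemma inter_ideal:
  assumes "\<forall>i\<in>I. is_ideal C (J i)"
  shows "is_ideal C (Inter_ideal C I J)"
  unfolding is_ideal_def Inter_ideal_def
proof (intro conjI allI ballI impI)
  fix A B show "Hom C A B \<inter> (\<Inter>i\<in>I. J i A B) \<subseteq> Hom C A B" by blast
next
  fix A B assume A: "A \<in> Ob C" and B: "B \<in> Ob C"
  show "zero C A B \<in> Hom C A B \<inter> (\<Inter>i\<in>I. J i A B)"
    using zero_hom[OF A B] assms A B unfolding is_ideal_def by blast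
  show "\<And>f g. f \<in> Hom C A B \<inter> (\<Inter>i\<in>I. J i A B) \<Longrightarrow> g \<in> Hom C A B \<inter> (\<Inter>i\<in>I. J i A B)
     \<Longrightarrow> add C f g \<in> Hom C A B \<inter> (\<Inter>i\<in>I. J i A B)"
  proof -
    fix f g assume f: "f \<in> Hom C A B \<inter> (\<Inter>i\<in>I. J i A B)" and g: "g \<in> Hom C A B \<inter> (\<Inter>i\<in>I. J i A B)"
    have "add C f g \<in> Hom C A B" using add_hom f g by blast
    moreover have "\<forall>i\<in>I. add C f g \<in> J i A B"
    proof
      fix i assume i: "i \<in> I"
      have "\<forall>f\<in>J i A B. \<forall>g\<in>J i A B. add C f g \<in> J i A B"
        using assms i A B unfolding is_ideal_def by blast
      then show "add C f g \<in> J i A B" using f g i by blast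
    qed
    ultimately show "add C f g \<in> Hom C A B \<inter> (\<Inter>i\<in>I. J i A B)" by blast
  qed
  show "\<And>f g. f \<in> Hom C A B \<inter> (\<Inter>i\<in>I. J i A B) \<Longrightarrow> g \<in> Hom C A B \<Longrightarrow> add C f g = zero C A B
     \<Longrightarrow> g \<in> Hom C A B \<inter> (\<Inter>i\<in>I. J i A B)"
  proof -
    fix f g assume f: "f \<in> Hom C A B \<inter> (\<Inter>i\<in>I. J i A B)" and g: "g \<in> Hom C A B"
      and e: "add C f g = zero C A B"
    have "\<forall>i\<in>I. g \<in> J i A B"
    proof
      fix i assume i: "i \<in> I"
      have "\<forall>f\<in>J i A B. \<forall>g\<in>Hom C A B. add C f g = zero C A B \<longrightarrow> g \<in> J i A B"
        using assms i A B unfolding is_ideal_def by blast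
      then show "g \<in> J i A B" using f g i e by blast
    qed
    then show "g \<in> Hom C A B \<inter> (\<Inter>i\<in>I. J i A B)" using g by blast
  qed
next
  fix A B D f g
  assume "f \<in> Hom C A B \<inter> (\<Inter>i\<in>I. J i A B) \<and> g \<in> Hom C B D"
  then have f: "f \<in> Hom C A B" "\<forall>i\<in>I. f \<in> J i A B" and g: "g \<in> Hom C B D" by auto
  have "\<forall>i\<in>I. cmp C g f \<in> J i A D"
  proof
    fix i assume i: "i \<in> I"
    have "\<forall>A B D f g. f \<in> J i A B \<and> g \<in> Hom C B D \<longrightarrow> cmp C g f \<in> J i A D"
      using assms i unfolding is_ideal_def by blast
    then show "cmp C g f \<in> J i A D" using f g i by blast
  qed
  then show "cmp C g f \<in> Hom C A D \<inter> (\<Inter>i\<in>I. J i A D)" using comp_hom[OF f(1) g] by blast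
next
  fix W A B h f
  assume "h \<in> Hom C W A \<and> f \<in> Hom C A B \<inter> (\<Inter>i\<in>I. J i A B)"
  then have f: "f \<in> Hom C A B" "\<forall>i\<in>I. f \<in> J i A B" and h: "h \<in> Hom C W A" by auto
  have "\<forall>i\<in>I. cmp C f h \<in> J i W B"
  proof
    fix i assume i: "i \<in> I"
    have "\<forall>W A B h f. h \<in> Hom C W A \<and> f \<in> J i A B \<longrightarrow> cmp C f h \<in> J i W B"
      using assms i unfolding is_ideal_def by blast
    then show "cmp C f h \<in> J i W B" using f h i by blast
  qed
  then show "cmp C f h \<in> Hom C W B \<inter> (\<Inter>i\<in>I. J i W B)" using comp_hom[OF h f(1)] by blast
qed

end


context exc begin

lemma main:
  fixes I :: "'i set" and J :: "'i \<Rightarrow> 'o \<Rightarrow> 'o \<Rightarrow> 'm set"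
  assumes hec: "has_exact_coproducts C TYPE('i)"
    and sp: "\<forall>i\<in>I. special_preenveloping C (J i)"
  shows "special_preenveloping C (Inter_ideal C I J)"
proof -
  have cex: "\<exists>S \<iota>. is_coproduct C I X S \<iota>" if "\<forall>k\<in>I. X k \<in> Ob C" for X :: "'i \<Rightarrow> 'o"
    using hec[unfolded has_exact_coproducts_def, THEN conjunct1, rule_format, OF that[rule_format]] .
  have cconf: "(u, v) \<in> Conf C SX SY SZ"
    if "\<forall>k\<in>I. (f k, g k) \<in> Conf C (X k) (Y k) (Z k)"
      "is_coproduct C I X SX \<iota>X" "is_coproduct C I Y SY \<iota>Y" "is_coproduct C I Z SZ \<iota>Z"
      "u \<in> Hom C SX SY" "\<forall>k\<in>I. cmp C u (\<iota>X k) = cmp C (\<iota>Y k) (f k)"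
      "v \<in> Hom C SY SZ" "\<forall>k\<in>I. cmp C v (\<iota>Y k) = cmp C (\<iota>Z k) (g k)"
    for X Y Z f g SX \<iota>X SY \<iota>Y SZ \<iota>Z u v
    using hec[unfolded has_exact_coproducts_def, THEN conjunct2, rule_format,
        where K=I and X=X and Y=Y and Z=Z and f=f and g=g and SX=SX and \<iota>X=\<iota>X and SY=SY
          and \<iota>Y=\<iota>Y and SZ=SZ and \<iota>Z=\<iota>Z and u=u and v=v] that by blast
  have idl: "\<forall>i\<in>I. is_ideal C (J i)" using sp unfolding special_preenveloping_def by blast
  have "\<forall>B\<in>Ob C. \<exists>C0 j. special_preenvelope C (Inter_ideal C I J) B C0 j"
  proof
    fix B assume B: "B \<in> Ob C"
    have "\<forall>i\<in>I. \<exists>C0 j A0 p0 C1 A1 j1 p1 c a. j \<in> J i B C0 \<and>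
        (j, p0) \<in> Conf C B C0 A0 \<and> (j1, p1) \<in> Conf C B C1 A1 \<and>
        conf_hom C B C0 A0 j p0 B C1 A1 j1 p1 (idt C B) c a \<and>
        a \<in> perp_ideal C (J i) A0 A1"
    proof
      fix i assume i: "i \<in> I"
      obtain C0 j where "special_preenvelope C (J i) B C0 j"
        using sp i B unfolding special_preenveloping_def by blast
      then show "\<exists>C0 j A0 p0 C1 A1 j1 p1 c a. j \<in> J i B C0 \<and>
        (j, p0) \<in> Conf C B C0 A0 \<and> (j1, p1) \<in> Conf C B C1 A1 \<and>
        conf_hom C B C0 A0 j p0 B C1 A1 j1 p1 (idt C B) c a \<and>
        a \<in> perp_ideal C (J i) A0 A1"
        unfolding special_preenvelope_def by blast
    qed
    then obtain C0 j A0 p0 C1 A1 j1 p1 c a where D: "\<forall>i\<in>I. j i \<in> J i B (C0 i) \<and>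
        (j i, p0 i) \<in> Conf C B (C0 i) (A0 i) \<and> (j1 i, p1 i) \<in> Conf C B (C1 i) (A1 i) \<and>
        conf_hom C B (C0 i) (A0 i) (j i) (p0 i) B (C1 i) (A1 i) (j1 i) (p1 i) (idt C B) (c i) (a i) \<and>
        a i \<in> perp_ideal C (J i) (A0 i) (A1 i)"
      by metis
    have Dc0: "\<And>i. i \<in> I \<Longrightarrow> (j i, p0 i) \<in> Conf C B (C0 i) (A0 i)" using D by blast
    have Dc1: "\<And>i. i \<in> I \<Longrightarrow> (j1 i, p1 i) \<in> Conf C B (C1 i) (A1 i)" using D by blast
    have jh: "\<forall>i\<in>I. j i \<in> Hom C B (C0 i)" and p0h: "\<forall>i\<in>I. p0 i \<in> Hom C (C0 i) (A0 i)"
      and j1h: "\<forall>i\<in>I. j1 i \<in> Hom C B (C1 i)" and p1h: "\<forall>i\<in>I. p1 i \<in> Hom C (C1 i) (A1 i)"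
      and C0o: "\<forall>i\<in>I. C0 i \<in> Ob C" and A0o: "\<forall>i\<in>I. A0 i \<in> Ob C"
      and C1o: "\<forall>i\<in>I. C1 i \<in> Ob C" and A1o: "\<forall>i\<in>I. A1 i \<in> Ob C"
      using conf_data[OF Dc0] conf_data[OF Dc1] by blast+
    have ch: "\<forall>i\<in>I. c i \<in> Hom C (C0 i) (C1 i) \<and> a i \<in> Hom C (A0 i) (A1 i) \<and>
       cmp C (c i) (j i) = j1 i \<and> cmp C (a i) (p0 i) = cmp C (p1 i) (c i)"
    proof
      fix i assume i: "i \<in> I"
      then show "c i \<in> Hom C (C0 i) (C1 i) \<and> a i \<in> Hom C (A0 i) (A1 i) \<and>
       cmp C (c i) (j i) = j1 i \<and> cmp C (a i) (p0 i) = cmp C (p1 i) (c i)"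
        using D id_r j1h unfolding conf_hom_def by metis
    qed
    obtain SB iB where cB: "is_coproduct C I (\<lambda>_. B) SB iB" using cex[of "\<lambda>_. B"] B by blast
    obtain SC0 iC0 where cC0: "is_coproduct C I C0 SC0 iC0" using cex[of C0] C0o by blast
    obtain SA0 iA0 where cA0: "is_coproduct C I A0 SA0 iA0" using cex[of A0] A0o by blast
    obtain SC1 iC1 where cC1: "is_coproduct C I C1 SC1 iC1" using cex[of C1] C1o by blast
    obtain SA1 iA1 where cA1: "is_coproduct C I A1 SA1 iA1" using cex[of A1] A1o by blast
    note iB = cop_in[OF cB] and iC0 = cop_in[OF cC0] and iA0 = cop_in[OF cA0]
      and iC1 = cop_in[OF cC1] and iA1 = cop_in[OF cA1]
    have SBo: "SB \<in> Ob C" using cop_ob[OF cB] .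
    have SC0o: "SC0 \<in> Ob C" using cop_ob[OF cC0] .
    have SA0o: "SA0 \<in> Ob C" using cop_ob[OF cA0] .
    have SC1o: "SC1 \<in> Ob C" using cop_ob[OF cC1] .
    have SA1o: "SA1 \<in> Ob C" using cop_ob[OF cA1] .
    obtain u where u: "u \<in> Hom C SB SC0" "\<forall>k\<in>I. cmp C u (iB k) = cmp C (iC0 k) (j k)"
      using cop_ex[OF cB SC0o, of "\<lambda>k. cmp C (iC0 k) (j k)"] comp_hom jh iC0 by metis
    obtain v where v: "v \<in> Hom C SC0 SA0" "\<forall>k\<in>I. cmp C v (iC0 k) = cmp C (iA0 k) (p0 k)"
      using cop_ex[OF cC0 SA0o, of "\<lambda>k. cmp C (iA0 k) (p0 k)"] comp_hom p0h iA0 by metis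
    obtain u1 where u1: "u1 \<in> Hom C SB SC1" "\<forall>k\<in>I. cmp C u1 (iB k) = cmp C (iC1 k) (j1 k)"
      using cop_ex[OF cB SC1o, of "\<lambda>k. cmp C (iC1 k) (j1 k)"] comp_hom j1h iC1 by metis
    obtain v1 where v1: "v1 \<in> Hom C SC1 SA1" "\<forall>k\<in>I. cmp C v1 (iC1 k) = cmp C (iA1 k) (p1 k)"
      using cop_ex[OF cC1 SA1o, of "\<lambda>k. cmp C (iA1 k) (p1 k)"] comp_hom p1h iA1 by metis
    obtain nab where nab: "nab \<in> Hom C SB B" "\<forall>k\<in>I. cmp C nab (iB k) = idt C B"
      using cop_ex[OF cB B, of "\<lambda>k. idt C B"] id_hom[OF B] by metis
    obtain cc where cc: "cc \<in> Hom C SC0 SC1" "\<forall>k\<in>I. cmp C cc (iC0 k) = cmp C (iC1 k) (c k)"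
      using cop_ex[OF cC0 SC1o, of "\<lambda>k. cmp C (iC1 k) (c k)"] comp_hom ch iC1 by metis
    obtain aa where aa: "aa \<in> Hom C SA0 SA1" "\<forall>k\<in>I. cmp C aa (iA0 k) = cmp C (iA1 k) (a k)"
      using cop_ex[OF cA0 SA1o, of "\<lambda>k. cmp C (iA1 k) (a k)"] comp_hom ch iA1 by metis
    have cuv: "(u, v) \<in> Conf C SB SC0 SA0"
      using cconf[of j p0 "\<lambda>_. B" C0 A0 SB iB SC0 iC0 SA0 iA0 u v] D cB cC0 cA0 u v by blast
    have cuv1: "(u1, v1) \<in> Conf C SB SC1 SA1"
      using cconf[of j1 p1 "\<lambda>_. B" C1 A1 SB iB SC1 iC1 SA1 iA1 u1 v1] D cB cC1 cA1 u1 v1 by blast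
    obtain P0 jj pp0 nn0 where po0: "is_pushout C SB SC0 B P0 u nab jj nn0"
      and cj: "(jj, pp0) \<in> Conf C B P0 SA0" and pn0: "cmp C pp0 nn0 = v"
      using po_conf[OF cuv nab(1)] by blast
    obtain P1 jj1 pp1 nn1 where po1: "is_pushout C SB SC1 B P1 u1 nab jj1 nn1"
      and cj1: "(jj1, pp1) \<in> Conf C B P1 SA1" and pn1: "cmp C pp1 nn1 = v1"
      using po_conf[OF cuv1 nab(1)] by blast
    note q0 = po_parts[OF po0] and q1 = po_parts[OF po1]
    note e0 = conf_data[OF cj] and e1 = conf_data[OF cj1]
    have ncc: "cmp C nn1 cc \<in> Hom C SC0 P1" using comp_hom[OF cc(1) q1(5)] .
    have L1: "cmp C (cmp C nn1 cc) u \<in> Hom C SB P1" using comp_hom[OF u(1) ncc] .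
    have L2: "cmp C jj1 nab \<in> Hom C SB P1" using comp_hom[OF nab(1) q1(4)] .
    have "\<forall>k\<in>I. cmp C (cmp C (cmp C nn1 cc) u) (iB k) = cmp C (cmp C jj1 nab) (iB k)"
    proof
      fix k assume k: "k \<in> I"
      have jk: "j k \<in> Hom C B (C0 k)" using jh k by blast
      have ck: "c k \<in> Hom C (C0 k) (C1 k)" and cj: "cmp C (c k) (j k) = j1 k" using ch k by auto
      have "cmp C (cmp C (cmp C nn1 cc) u) (iB k) = cmp C (cmp C nn1 cc) (cmp C (iC0 k) (j k))"
        using assoc[OF iB[OF k] u(1) ncc] u(2) k by simp
      also have "\<dots> = cmp C nn1 (cmp C (cmp C cc (iC0 k)) (j k))"
        using assoc[OF jk iC0[OF k] ncc] assoc[OF iC0[OF k] cc(1) q1(5)]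
          assoc[OF jk comp_hom[OF iC0[OF k] cc(1)] q1(5)] by simp
      also have "\<dots> = cmp C nn1 (cmp C (iC1 k) (j1 k))"
        using cc(2) k assoc[OF jk ck iC1[OF k]] cj by simp
      also have "\<dots> = cmp C (cmp C nn1 u1) (iB k)"
        using u1(2) k assoc[OF iB[OF k] u1(1) q1(5)] by simp
      also have "\<dots> = cmp C jj1 (cmp C nab (iB k))"
        using q1(6) assoc[OF iB[OF k] nab(1) q1(4)] by simp
      also have "\<dots> = cmp C (cmp C jj1 nab) (iB k)"
        using assoc[OF iB[OF k] nab(1) q1(4)] by simp
      finally show "cmp C (cmp C (cmp C nn1 cc) u) (iB k) = cmp C (cmp C jj1 nab) (iB k)" .
    qed
    then have "cmp C (cmp C nn1 cc) u = cmp C jj1 nab" using cop_uniq[OF cB L1 L2] by blast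
    then obtain ccp where ccp: "ccp \<in> Hom C P0 P1" "cmp C ccp nn0 = cmp C nn1 cc" "cmp C ccp jj = jj1"
      using po_ex[OF po0 ncc q1(4)] by blast
    have av: "cmp C aa v = cmp C v1 cc"
    proof -
      have "\<forall>k\<in>I. cmp C (cmp C aa v) (iC0 k) = cmp C (cmp C v1 cc) (iC0 k)"
      proof
        fix k assume k: "k \<in> I"
        have p0k: "p0 k \<in> Hom C (C0 k) (A0 k)" using p0h k by blast
        have ck: "c k \<in> Hom C (C0 k) (C1 k)" and ak: "a k \<in> Hom C (A0 k) (A1 k)"
          and sqk: "cmp C (a k) (p0 k) = cmp C (p1 k) (c k)" using ch k by auto
        have p1k: "p1 k \<in> Hom C (C1 k) (A1 k)" using p1h k by blast
        have "cmp C (cmp C aa v) (iC0 k) = cmp C aa (cmp C (iA0 k) (p0 k))"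
          using assoc[OF iC0[OF k] v(1) aa(1)] v(2) k by simp
        also have "\<dots> = cmp C (iA1 k) (cmp C (a k) (p0 k))"
          using assoc[OF p0k iA0[OF k] aa(1)] aa(2) k assoc[OF p0k ak iA1[OF k]] by simp
        also have "\<dots> = cmp C (cmp C (iA1 k) (p1 k)) (c k)"
          using sqk assoc[OF ck p1k iA1[OF k]] by simp
        also have "\<dots> = cmp C (cmp C v1 cc) (iC0 k)"
          using v1(2) k assoc[OF ck iC1[OF k] v1(1)] cc(2) assoc[OF iC0[OF k] cc(1) v1(1)] by simp
        finally show "cmp C (cmp C aa v) (iC0 k) = cmp C (cmp C v1 cc) (iC0 k)" .
      qed
      then show ?thesis using cop_uniq[OF cC0 comp_hom[OF v(1) aa(1)] comp_hom[OF cc(1) v1(1)]] by blast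
    qed
    have w1: "cmp C aa pp0 \<in> Hom C P0 SA1" using comp_hom[OF e0(5) aa(1)] .
    have w2: "cmp C pp1 ccp \<in> Hom C P0 SA1" using comp_hom[OF ccp(1) e1(5)] .
    have "cmp C (cmp C aa pp0) nn0 = cmp C (cmp C pp1 ccp) nn0"
      using assoc[OF q0(5) e0(5) aa(1)] pn0 av assoc[OF q0(5) ccp(1) e1(5)] ccp(2)
        assoc[OF cc(1) q1(5) e1(5)] pn1 by simp
    moreover have "cmp C (cmp C aa pp0) jj = cmp C (cmp C pp1 ccp) jj"
      using assoc[OF q0(4) e0(5) aa(1)] e0(6) comp_zero[OF aa(1) B]
        assoc[OF q0(4) ccp(1) e1(5)] ccp(3) e1(6) by simp
    ultimately have apc: "cmp C aa pp0 = cmp C pp1 ccp" using po_uniq[OF po0 w1 w2] by blast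
    have chm: "conf_hom C B P0 SA0 jj pp0 B P1 SA1 jj1 pp1 (idt C B) ccp aa"
      unfolding conf_hom_def using id_hom[OF B] ccp aa(1) id_r[OF e1(4)] apc by simp
    have jjI: "jj \<in> Inter_ideal C I J B P0"
    proof -
      have "\<forall>k\<in>I. jj \<in> J k B P0"
      proof
        fix k assume k: "k \<in> I"
        have jk: "j k \<in> Hom C B (C0 k)" and jJ: "j k \<in> J k B (C0 k)" using jh D k by auto
        have "cmp C (cmp C nn0 (iC0 k)) (j k) = cmp C nn0 (cmp C u (iB k))"
          using assoc[OF jk iC0[OF k] q0(5)] u(2) k by simp
        also have "\<dots> = cmp C jj (cmp C nab (iB k))"
          using assoc[OF iB[OF k] u(1) q0(5)] q0(6) assoc[OF iB[OF k] nab(1) q0(4)] by simp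
        also have "\<dots> = jj" using nab(2) k id_r[OF q0(4)] by simp
        finally have eq: "cmp C (cmp C nn0 (iC0 k)) (j k) = jj" .
        have "\<forall>A B D f g. f \<in> J k A B \<and> g \<in> Hom C B D \<longrightarrow> cmp C g f \<in> J k A D"
          using idl k unfolding is_ideal_def by blast
        then show "jj \<in> J k B P0" using eq jJ comp_hom[OF iC0[OF k] q0(5)] by metis
      qed
      then show ?thesis unfolding Inter_ideal_def using q0(4) by blast
    qed
    have aaP: "aa \<in> perp_ideal C (Inter_ideal C I J) SA0 SA1"
      unfolding perp_ideal_def
    proof (intro CollectI conjI allI ballI)
      show "aa \<in> Hom C SA0 SA1" using aa(1) .
    next
      fix B0 B1 b assume b: "b \<in> Inter_ideal C I J B0 B1"
      have "\<forall>k\<in>I. a k \<in> Hom C (A0 k) (A1 k) \<and> cmp C aa (iA0 k) = cmp C (iA1 k) (a k)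
         \<and> Ext_zero C (A0 k) (A1 k) (a k) B0 B1 b"
      proof
        fix k assume k: "k \<in> I"
        have "b \<in> J k B0 B1" using b k unfolding Inter_ideal_def by blast
        moreover have "a k \<in> perp_ideal C (J k) (A0 k) (A1 k)" using D k by blast
        ultimately have "Ext_zero C (A0 k) (A1 k) (a k) B0 B1 b" unfolding perp_ideal_def by blast
        then show "a k \<in> Hom C (A0 k) (A1 k) \<and> cmp C aa (iA0 k) = cmp C (iA1 k) (a k)
         \<and> Ext_zero C (A0 k) (A1 k) (a k) B0 B1 b" using ch aa(2) k by blast
      qed
      then show "Ext_zero C SA0 SA1 aa B0 B1 b" using ext_coprod[OF cA0 cA1 aa(1)] by blast
    qed
    have "special_preenvelope C (Inter_ideal C I J) B P0 jj"
      unfolding special_preenvelope_def using jjI cj cj1 chm aaP by blast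
    then show "\<exists>C0 j. special_preenvelope C (Inter_ideal C I J) B C0 j" by blast
  qed
  then show ?thesis unfolding special_preenveloping_def using inter_ideal[OF idl] by blast
qed

end


theorem theorem5p5:
  fixes C :: "('o, 'm) excat" and I :: "'i set" and J :: "'i \<Rightarrow> 'o \<Rightarrow> 'o \<Rightarrow> 'm set"
  assumes "exact_category C"
    and "has_exact_coproducts C TYPE('i)"
    and "\<forall>i\<in>I. special_preenveloping C (J i)"
  shows "special_preenveloping C (Inter_ideal C I J)"
proof -
  interpret exc C using assms(1) by (unfold_locales)
  show ?thesis using main[OF assms(2,3)] .
qed

end
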